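(* Let $\frac14\le a\le b$. For any $t\ge\frac1{10}$, \[ \mathcal{R}_I(t,a,b) = O\!\left(\frac{\sqrt b}{t}\right). \]
   Context: Write $a = \frac14+\alpha^2$, $b=\frac14+\beta^2$ with $0\le\alpha\le\beta$. For $t>0$ and $r\in\mathbb{C}$, $h_t(r) = \frac{t}{\sqrt\pi}\int_\alpha^\beta\exp(-t^2(r-\rho)^2)\,d\rho$, and \[ \mathcal{R}_I(t,a,b) = \frac{1}{4\pi}\int_0^{+\infty}\big(h_t(r)+h_t(-r) - \mathbf{1}_{[\alpha,\beta]}(r)\big)\,r\tanh(\pi r)\,dr. \] $T_1=O(T_2)$ means $|T_1|\le CT_2$ with a universal constant $C$ independent of $a,b,t$. *)

theory Defs
  imports "HOL-Analysis.Analysis"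
begin

definition spec_param :: "real \<Rightarrow> real" where
  "spec_param a = sqrt (a - 1/4)"

definition h_fun :: "real \<Rightarrow> real \<Rightarrow> real \<Rightarrow> real \<Rightarrow> real" where
  "h_fun t \<alpha> \<beta> r = t / sqrt pi * integral {\<alpha>..\<beta>} (\<lambda>\<rho>. exp (- (t\<^sup>2 * (r - \<rho>)\<^sup>2)))"

definition R_I :: "real \<Rightarrow> real \<Rightarrow> real \<Rightarrow> real" where
  "R_I t a b = (let \<alpha> = spec_param a; \<beta> = spec_param b in
     1 / (4 * pi) * integral {0..}
       (\<lambda>r. (h_fun t \<alpha> \<beta> r + h_fun t \<alpha> \<beta> (-r) - indicator {\<alpha>..\<beta>} r) * r * tanh (pi * r)))"

end

theory Submission imports Defs "HOL-Probability.Distributions"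
begin

lemma exp14_le_sqrtpi: "exp (1/4::real) \<le> sqrt pi"
proof -
  have "exp (1/4::real) ^ 4 = exp 1" by (simp flip: exp_of_nat_mult)
  also have "\<dots> \<le> 3" by (rule exp_le)
  also have "3 \<le> sqrt pi ^ 4"
  proof -
    have "sqrt pi ^ 4 = (sqrt pi * sqrt pi) * (sqrt pi * sqrt pi)" by (simp only: power4_eq_xxxx mult.assoc)
    also have "\<dots> = pi * pi" by simp
    also have "3 * 1 \<le> pi * pi" using pi_gt3 by (intro mult_mono) auto
    finally show ?thesis by simp
  qed
  finally have "exp (1/4::real) ^ Suc 3 \<le> sqrt pi ^ Suc 3" by (simp add: numeral_eq_Suc)
  then show ?thesis by (rule power_le_imp_le_base) auto
qed

lemma gauss_le:
  fixes t x :: real assumes "t > 0"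
  shows "t / sqrt pi * exp (- (t\<^sup>2 * x\<^sup>2)) \<le> t * exp (- t * \<bar>x\<bar>)"
proof -
  have "- (t\<^sup>2 * x\<^sup>2) \<le> 1/4 + (- t * \<bar>x\<bar>)"
  proof -
    have "0 \<le> (t * \<bar>x\<bar> - 1/2)\<^sup>2" by simp
    moreover have "(t * \<bar>x\<bar> - 1/2)\<^sup>2 = (t * \<bar>x\<bar>)\<^sup>2 - t * \<bar>x\<bar> + 1/4"
      by (simp add: power2_eq_square algebra_simps)
    moreover have "(t * \<bar>x\<bar>)\<^sup>2 = t\<^sup>2 * x\<^sup>2" by (simp add: power_mult_distrib)
    ultimately show ?thesis by linarith
  qed
  hence "exp (- (t\<^sup>2 * x\<^sup>2)) \<le> exp (1/4) * exp (- t * \<bar>x\<bar>)"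
    by (simp flip: exp_add)
  also have "\<dots> \<le> sqrt pi * exp (- t * \<bar>x\<bar>)"
    using exp14_le_sqrtpi by (intro mult_right_mono) auto
  finally show ?thesis using assms by (simp add: field_simps)
qed

lemma hl_right:
  fixes t r c :: real assumes "t > 0"
  shows "((\<lambda>\<rho>. t * exp (- t * (\<rho> - r))) has_integral exp (- t * (c - r))) {c..}"
proof -
  have "((\<lambda>x. (t * exp (t * r)) * exp (- t * x)) has_integral (t * exp (t * r)) * (exp (- t * c) / t)) {c..}"
    by (intro has_integral_mult_right has_integral_exp_minus_to_infinity assms)
  moreover have "(\<lambda>x. (t * exp (t * r)) * exp (- t * x)) = (\<lambda>\<rho>. t * exp (- t * (\<rho> - r)))"
    by (auto simp: fun_eq_iff algebra_simps simp flip: exp_add)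
  moreover have "(t * exp (t * r)) * (exp (- t * c) / t) = exp (- t * (c - r))"
    using assms by (auto simp: algebra_simps simp flip: exp_add)
  ultimately show ?thesis by simp
qed

lemma hl_left:
  fixes t r c :: real assumes "t > 0"
  shows "((\<lambda>\<rho>. t * exp (- t * (r - \<rho>))) has_integral exp (- t * (r - c))) {..c}"
proof -
  define f where "f = (\<lambda>y. t * exp (- t * (y - (-r))))"
  have hf: "(f has_integral exp (- t * (-c - (-r)))) {-c..}"
    unfolding f_def by (rule hl_right[OF assms])
  have "f absolutely_integrable_on {-c..}"
    using hf assms by (intro nonnegative_absolutely_integrable_1) (auto simp: f_def)
  moreover have "integral {-c..} f = exp (- t * (r - c))" using hf by (simp add: integral_unique)
  ultimately have "(\<lambda>x. f (-x)) absolutely_integrable_on {..c} \<and> integral {..c} (\<lambda>x. f (-x)) = exp (- t * (r - c))"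
    using has_absolute_integral_reflect_real[of "{..c}" "{-c..}" f] by auto
  hence "((\<lambda>x. f (-x)) has_integral exp (- t * (r - c))) {..c}"
    using absolutely_integrable_on_def has_integral_integrable_integral by blast
  thus ?thesis by (simp add: f_def algebra_simps)
qed

lemma gauss_total:
  fixes t r :: real assumes "t > 0"
  shows "((\<lambda>\<rho>. t / sqrt pi * exp (- (t\<^sup>2 * (r - \<rho>)\<^sup>2))) has_integral 1) UNIV"
proof -
  define \<sigma> where "\<sigma> = 1 / (sqrt 2 * t)"
  have s2: "\<sigma>\<^sup>2 = 1 / (2 * t\<^sup>2)" unfolding \<sigma>_def by (simp add: power_divide power_mult_distrib)
  have sq: "sqrt (2 * pi * \<sigma>\<^sup>2) = sqrt pi / t"
    using assms by (simp add: s2 real_sqrt_divide real_sqrt_mult)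
  have "normal_density r \<sigma> = (\<lambda>\<rho>. t / sqrt pi * exp (- (t\<^sup>2 * (r - \<rho>)\<^sup>2)))"
    unfolding normal_density_def sq using assms
    by (auto simp: fun_eq_iff s2 power2_commute[of _ r])
  moreover have "\<sigma> > 0" using assms by (simp add: \<sigma>_def)
  moreover have "(normal_density r \<sigma> has_integral 1) UNIV"
    using has_integral_integral_lborel[OF integrable_normal_density[where \<mu>=r and \<sigma>=\<sigma>]]
      integral_normal_density[where \<mu>=r and \<sigma>=\<sigma>] \<open>\<sigma> > 0\<close> by simp
  ultimately show ?thesis by simp
qed

definition phi :: "real \<Rightarrow> real \<Rightarrow> real \<Rightarrow> real" where
  "phi t r \<rho> = t / sqrt pi * exp (- (t\<^sup>2 * (r - \<rho>)\<^sup>2))"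

lemma h_eq: "h_fun t \<alpha> \<beta> r = integral {\<alpha>..\<beta>} (phi t r)"
  unfolding h_fun_def phi_def
  using integral_cmul[where c="t / sqrt pi" and f="\<lambda>\<rho>. exp (- (t\<^sup>2 * (r - \<rho>)\<^sup>2))" and S="{\<alpha>..\<beta>}"] by simp

lemma phi_int: "phi t r integrable_on {\<alpha>..\<beta>}"
  unfolding phi_def by (intro integrable_continuous_interval continuous_intros)

lemma phi_nonneg: "t \<ge> 0 \<Longrightarrow> phi t r \<rho> \<ge> 0"
  by (simp add: phi_def)

lemma phi_le: "t > 0 \<Longrightarrow> phi t r \<rho> \<le> t * exp (- t * \<bar>r - \<rho>\<bar>)"
  unfolding phi_def by (rule gauss_le)

lemma h_nonneg: "t \<ge> 0 \<Longrightarrow> \<alpha> \<le> \<beta> \<Longrightarrow> h_fun t \<alpha> \<beta> r \<ge> 0"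
  unfolding h_eq by (intro integral_nonneg phi_int phi_nonneg) auto

lemma h_le_right:
  assumes "t > 0" "\<alpha> \<le> \<beta>" "\<beta> \<le> r"
  shows "h_fun t \<alpha> \<beta> r \<le> exp (- t * (r - \<beta>))"
proof -
  have ftc: "((\<lambda>\<rho>. t * exp (- t * (r - \<rho>))) has_integral
      (exp (- t * (r - \<beta>)) - exp (- t * (r - \<alpha>)))) {\<alpha>..\<beta>}"
    using assms
    by (intro fundamental_theorem_of_calculus)
       (auto intro!: derivative_eq_intros simp flip: has_real_derivative_iff_has_vector_derivative)
  have "integral {\<alpha>..\<beta>} (phi t r) \<le> exp (- t * (r - \<beta>)) - exp (- t * (r - \<alpha>))"
  proof (rule has_integral_le[OF integrable_integral[OF phi_int] ftc])
    fix x assume "x \<in> {\<alpha>..\<beta>}"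
    then show "phi t r x \<le> t * exp (- t * (r - x))"
      using phi_le[OF assms(1), of r x] assms by simp
  qed
  then show ?thesis unfolding h_eq
    using exp_gt_zero[of "- t * (r - \<alpha>)"] exp_gt_zero[of "- t * (\<beta> - r)"] by linarith
qed

lemma h_le_left:
  assumes "t > 0" "\<alpha> \<le> \<beta>" "r \<le> \<alpha>"
  shows "h_fun t \<alpha> \<beta> r \<le> exp (- t * (\<alpha> - r))"
proof -
  have ftc: "((\<lambda>\<rho>. t * exp (- t * (\<rho> - r))) has_integral
      ((- exp (- t * (\<beta> - r))) - (- exp (- t * (\<alpha> - r))))) {\<alpha>..\<beta>}"
    using assms
    by (intro fundamental_theorem_of_calculus)
       (auto intro!: derivative_eq_intros simp flip: has_real_derivative_iff_has_vector_derivative)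
  have "integral {\<alpha>..\<beta>} (phi t r) \<le> (- exp (- t * (\<beta> - r))) - (- exp (- t * (\<alpha> - r)))"
  proof (rule has_integral_le[OF integrable_integral[OF phi_int] ftc])
    fix x assume "x \<in> {\<alpha>..\<beta>}"
    then show "phi t r x \<le> t * exp (- t * (x - r))"
      using phi_le[OF assms(1), of r x] assms by simp
  qed
  then show ?thesis unfolding h_eq
    using exp_gt_zero[of "- t * (r - \<alpha>)"] exp_gt_zero[of "- t * (\<beta> - r)"] by linarith
qed

lemma h_mid:
  assumes "t > 0" "\<alpha> \<le> r" "r \<le> \<beta>"
  shows "h_fun t \<alpha> \<beta> r \<le> 1 \<and> 1 - h_fun t \<alpha> \<beta> r \<le> exp (- t * (r - \<alpha>)) + exp (- t * (\<beta> - r))"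
proof -
  have tot: "(phi t r has_integral 1) UNIV"
    unfolding phi_def by (rule gauss_total[OF assms(1)])
  have hi: "((\<lambda>\<rho>. if \<rho> \<in> {\<alpha>..\<beta>} then phi t r \<rho> else 0) has_integral h_fun t \<alpha> \<beta> r) UNIV"
    unfolding has_integral_restrict_UNIV h_eq using phi_int by blast
  have "h_fun t \<alpha> \<beta> r \<le> 1"
    by (rule has_integral_le[OF hi tot]) (use phi_nonneg assms in auto)
  moreover
  have L: "((\<lambda>\<rho>. if \<rho> \<in> {..\<alpha>} then t * exp (- t * (r - \<rho>)) else 0) has_integral exp (- t * (r - \<alpha>))) UNIV"
    unfolding has_integral_restrict_UNIV by (rule hl_left[OF assms(1)])
  have R: "((\<lambda>\<rho>. if \<rho> \<in> {\<beta>..} then t * exp (- t * (\<rho> - r)) else 0) has_integral exp (- t * (\<beta> - r))) UNIV"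
    unfolding has_integral_restrict_UNIV by (rule hl_right[OF assms(1)])
  have "1 \<le> h_fun t \<alpha> \<beta> r + exp (- t * (r - \<alpha>)) + exp (- t * (\<beta> - r))"
  proof (rule has_integral_le[OF tot has_integral_add[OF has_integral_add[OF hi L] R]])
    fix x :: real
    have g: "phi t r x \<le> t * exp (- t * \<bar>r - x\<bar>)" by (rule phi_le[OF assms(1)])
    have p: "phi t r x \<ge> 0" using assms by (intro phi_nonneg) auto
    have e1: "t * exp (- t * (r - x)) \<ge> 0" "t * exp (- t * (x - r)) \<ge> 0" using assms by auto
    show "phi t r x \<le> (if x \<in> {\<alpha>..\<beta>} then phi t r x else 0) +
        (if x \<in> {..\<alpha>} then t * exp (- t * (r - x)) else 0) +
        (if x \<in> {\<beta>..} then t * exp (- t * (x - r)) else 0)"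
    proof (cases "x \<in> {\<alpha>..\<beta>}")
      case True then show ?thesis using e1 by auto
    next
      case False
      then consider "x < \<alpha>" | "x > \<beta>" by auto
      then show ?thesis
      proof cases
        case 1 then show ?thesis using g e1 assms by (auto simp: abs_if)
      next
        case 2 then show ?thesis using g e1 assms by (auto simp: abs_if)
      qed
    qed
  qed
  ultimately show ?thesis by linarith
qed

lemma h_ind:
  assumes "t > 0" "\<alpha> \<le> \<beta>"
  shows "\<bar>h_fun t \<alpha> \<beta> r - indicator {\<alpha>..\<beta>} r\<bar> \<le> exp (- t * \<bar>r - \<alpha>\<bar>) + exp (- t * \<bar>r - \<beta>\<bar>)"
proof -
  have n: "h_fun t \<alpha> \<beta> r \<ge> 0" using assms h_nonneg by auto
  have p: "exp (- t * \<bar>r - \<alpha>\<bar>) > 0" "exp (- t * \<bar>r - \<beta>\<bar>) > 0" by auto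
  consider "r < \<alpha>" | "\<alpha> \<le> r \<and> r \<le> \<beta>" | "r > \<beta>" by linarith
  then show ?thesis
  proof cases
    case 1
    have "indicator {\<alpha>..\<beta>} r = (0::real)" using 1 by (simp add: indicator_def)
    then have "\<bar>h_fun t \<alpha> \<beta> r - indicator {\<alpha>..\<beta>} r\<bar> = h_fun t \<alpha> \<beta> r" using n by simp
    moreover have "exp (- t * \<bar>r - \<alpha>\<bar>) = exp (- t * (\<alpha> - r))" using 1 by simp
    ultimately show ?thesis using h_le_left[OF assms, of r] p 1 by linarith
  next
    case 2
    have "indicator {\<alpha>..\<beta>} r = (1::real)" using 2 by (simp add: indicator_def)
    then have "\<bar>h_fun t \<alpha> \<beta> r - indicator {\<alpha>..\<beta>} r\<bar> = 1 - h_fun t \<alpha> \<beta> r"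
      using h_mid[OF assms(1), of \<alpha> r \<beta>] 2 by simp
    moreover have "exp (- t * \<bar>r - \<alpha>\<bar>) = exp (- t * (r - \<alpha>))" "exp (- t * \<bar>r - \<beta>\<bar>) = exp (- t * (\<beta> - r))"
      using 2 by auto
    ultimately show ?thesis using h_mid[OF assms(1), of \<alpha> r \<beta>] 2 by linarith
  next
    case 3
    have "indicator {\<alpha>..\<beta>} r = (0::real)" using 3 by (simp add: indicator_def)
    then have "\<bar>h_fun t \<alpha> \<beta> r - indicator {\<alpha>..\<beta>} r\<bar> = h_fun t \<alpha> \<beta> r" using n by simp
    moreover have "exp (- t * \<bar>r - \<beta>\<bar>) = exp (- t * (r - \<beta>))" using 3 by simp
    ultimately show ?thesis using h_le_right[OF assms, of r] p 3 by linarith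
  qed
qed

lemma maj:
  fixes t c :: real
  assumes "t > 0" "c \<ge> 0"
  shows "\<exists>I. ((\<lambda>r. exp (- t * \<bar>r - c\<bar>) * r) has_integral I) {0..} \<and> I \<le> 2 * c / t + 2 / t\<^sup>2"
proof -
  define f where "f = (\<lambda>r. exp (- t * \<bar>r - c\<bar>) * r)"
  have int1: "f integrable_on {0..c}"
    unfolding f_def by (rule integrable_continuous_interval) (intro continuous_intros)
  have ftc1: "((\<lambda>r. c * exp (- t * (c - r))) has_integral
      (c / t * exp (- t * (c - c)) - c / t * exp (- t * (c - 0)))) {0..c}"
    using assms
    by (intro fundamental_theorem_of_calculus)
       (auto intro!: derivative_eq_intros simp flip: has_real_derivative_iff_has_vector_derivative)
  have I1: "integral {0..c} f \<le> c / t * exp (- t * (c - c)) - c / t * exp (- t * (c - 0))"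
  proof (rule has_integral_le[OF integrable_integral[OF int1] ftc1])
    fix x assume x: "x \<in> {0..c}"
    then have "\<bar>x - c\<bar> = c - x" by auto
    moreover have "exp (- t * (c - x)) * x \<le> exp (- t * (c - x)) * c"
      using x by (intro mult_left_mono) auto
    ultimately show "f x \<le> c * exp (- t * (c - x))" unfolding f_def by (simp add: mult.commute)
  qed
  have "c / t * exp (- t * (c - 0)) \<ge> 0" using assms by auto
  with I1 have I1': "integral {0..c} f \<le> c / t" by simp
  define G where "G = (\<lambda>r. - exp (- t * (r - c)) * (r / t + 1 / t\<^sup>2))"
  have ftc2: "(f has_integral (G y - G c)) {c..y}" if "c \<le> y" for y
  proof -
    have "((\<lambda>r. exp (- t * (r - c)) * r) has_integral (G y - G c)) {c..y}"
      unfolding G_def using assms that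
      by (intro fundamental_theorem_of_calculus)
         (auto intro!: derivative_eq_intros simp flip: has_real_derivative_iff_has_vector_derivative
               simp: field_simps power2_eq_square)
    then show ?thesis
      by (rule has_integral_eq[rotated]) (auto simp: f_def)
  qed
  have "(f has_integral (c / t + 1 / t\<^sup>2)) {c..}"
  proof (rule has_integral_to_inf)
    fix y show "f integrable_on {c..y}"
      unfolding f_def by (rule integrable_continuous_interval) (intro continuous_intros)
  next
    fix y assume "c \<le> y" then show "0 \<le> f y" using assms unfolding f_def by auto
  next
    have ev: "\<forall>\<^sub>F y in at_top. integral {c..y} f = G y - G c"
      using ftc2 eventually_at_top_linorder[of "\<lambda>y. integral {c..y} f = G y - G c"]
      by (auto intro: integral_unique)
    have "((\<lambda>y. G y - G c) \<longlongrightarrow> c / t + 1 / t\<^sup>2) at_top"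
    proof -
      have lin: "filterlim (\<lambda>y. t * y) at_top at_top"
        using assms by (intro filterlim_tendsto_pos_mult_at_top[OF tendsto_const] filterlim_ident) auto
      have A: "((\<lambda>z::real. z / exp z) \<longlongrightarrow> 0) at_top"
        using tendsto_power_div_exp_0[of 1] by simp
      have B: "((\<lambda>z::real. inverse (exp z)) \<longlongrightarrow> 0) at_top"
        by (rule tendsto_inverse_0_at_top[OF exp_at_top])
      have A': "((\<lambda>y. (t * y) / exp (t * y)) \<longlongrightarrow> 0) at_top"
        using filterlim_compose[OF A lin] by simp
      have B': "((\<lambda>y. inverse (exp (t * y))) \<longlongrightarrow> 0) at_top"
        using filterlim_compose[OF B lin] by simp
      have "((\<lambda>y. - (exp (t * c) * ((1 / t\<^sup>2) * ((t * y) / exp (t * y)) + (1 / t\<^sup>2) * inverse (exp (t * y)))))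
             \<longlongrightarrow> - (exp (t * c) * ((1 / t\<^sup>2) * 0 + (1 / t\<^sup>2) * 0))) at_top"
        by (intro tendsto_intros A' B')
      moreover have "exp (- t * (y - c)) * (y / t + 1 / t\<^sup>2) =
          exp (t * c) * ((1 / t\<^sup>2) * ((t * y) / exp (t * y)) + (1 / t\<^sup>2) * inverse (exp (t * y)))" for y
      proof -
        have "exp (- t * (y - c)) = exp (t * c) / exp (t * y)"
          by (simp add: algebra_simps flip: exp_diff)
        then show ?thesis using assms by (simp add: field_simps power2_eq_square)
      qed
      ultimately have "((\<lambda>y. - exp (- t * (y - c)) * (y / t + 1 / t\<^sup>2)) \<longlongrightarrow> 0) at_top"
        by simp
      then have "((\<lambda>y. - exp (- t * (y - c)) * (y / t + 1 / t\<^sup>2) - G c) \<longlongrightarrow> 0 - G c) at_top"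
        by (intro tendsto_intros)
      moreover have "0 - G c = c / t + 1 / t\<^sup>2" unfolding G_def by simp
      ultimately show ?thesis unfolding G_def by (simp add: add.commute)
    qed
    then show "((\<lambda>y. integral {c..y} f) \<longlongrightarrow> c / t + 1 / t\<^sup>2) at_top"
      using ev by (simp add: tendsto_cong)
  qed
  then have "(f has_integral (integral {0..c} f + (c / t + 1 / t\<^sup>2))) ({0..c} \<union> {c..})"
  proof (intro has_integral_Un integrable_integral int1)
    have "{0..c} \<inter> {c..} = {c}" using assms by auto
    then show "negligible ({0..c} \<inter> {c..})" by simp
  qed
  moreover have "{0..c} \<union> {c..} = {0::real..}" using assms by auto
  ultimately have "(f has_integral (integral {0..c} f + (c / t + 1 / t\<^sup>2))) {0..}"
    using assms by (simp add: ivl_disj_un)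
  moreover have "integral {0..c} f + (c / t + 1 / t\<^sup>2) \<le> 2 * c / t + 2 / t\<^sup>2"
  proof -
    have "1 / t\<^sup>2 \<ge> 0" by simp
    moreover have "2 * c / t = c / t + c / t" by simp
    ultimately show ?thesis using I1' by linarith
  qed
  ultimately show ?thesis unfolding f_def by blast
qed

lemma tanh_abs_le: "\<bar>tanh (x::real)\<bar> \<le> 1"
  using tanh_real_bounds[of x] by auto

lemma Fbound:
  fixes t \<alpha> \<beta> r :: real
  assumes t0: "t > 0" and \<alpha>0: "0 \<le> \<alpha>" and \<alpha>\<beta>: "\<alpha> \<le> \<beta>" and r0: "0 \<le> r"
  shows "\<bar>(h_fun t \<alpha> \<beta> r + h_fun t \<alpha> \<beta> (-r) - indicator {\<alpha>..\<beta>} r) * r * tanh (pi * r)\<bar>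
    \<le> exp (- t * \<bar>r - \<alpha>\<bar>) * r + exp (- t * \<bar>r - \<beta>\<bar>) * r + exp (- t * \<bar>r - 0\<bar>) * r"
proof -
  have hi: "\<bar>h_fun t \<alpha> \<beta> r - indicator {\<alpha>..\<beta>} r\<bar> \<le> exp (- t * \<bar>r - \<alpha>\<bar>) + exp (- t * \<bar>r - \<beta>\<bar>)"
    by (rule h_ind[OF t0 \<alpha>\<beta>])
  have hm1: "h_fun t \<alpha> \<beta> (-r) \<le> exp (- t * (\<alpha> - - r))"
    using h_le_left[OF t0 \<alpha>\<beta>, of "-r"] r0 \<alpha>0 by simp
  have "exp (- t * (\<alpha> - - r)) \<le> exp (- t * \<bar>r - 0\<bar>)"
    using t0 \<alpha>0 r0 by (simp add: mult_nonneg_nonneg algebra_simps)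
  with hm1 have hm: "h_fun t \<alpha> \<beta> (-r) \<le> exp (- t * \<bar>r - 0\<bar>)" by linarith
  have hm0: "h_fun t \<alpha> \<beta> (-r) \<ge> 0" using h_nonneg t0 \<alpha>\<beta> by auto
  define D where "D = h_fun t \<alpha> \<beta> r + h_fun t \<alpha> \<beta> (-r) - indicator {\<alpha>..\<beta>} r"
  have D: "\<bar>D\<bar> \<le> exp (- t * \<bar>r - \<alpha>\<bar>) + exp (- t * \<bar>r - \<beta>\<bar>) + exp (- t * \<bar>r - 0\<bar>)"
    unfolding D_def using hi hm hm0 by linarith
  have "\<bar>D * r * tanh (pi * r)\<bar> = \<bar>D\<bar> * r * \<bar>tanh (pi * r)\<bar>"
    using r0 by (simp add: abs_mult)
  also have "\<dots> \<le> \<bar>D\<bar> * r * 1"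
    by (intro mult_left_mono tanh_abs_le) (use r0 in auto)
  also have "\<dots> \<le> (exp (- t * \<bar>r - \<alpha>\<bar>) + exp (- t * \<bar>r - \<beta>\<bar>) + exp (- t * \<bar>r - 0\<bar>)) * r"
    using D r0 by (simp add: mult_right_mono)
  also have "\<dots> = exp (- t * \<bar>r - \<alpha>\<bar>) * r + exp (- t * \<bar>r - \<beta>\<bar>) * r + exp (- t * \<bar>r - 0\<bar>) * r"
    by (simp add: algebra_simps)
  finally show ?thesis unfolding D_def .
qed

lemma intbound:
  fixes F g :: "real \<Rightarrow> real"
  assumes gI: "(g has_integral I) S" and le: "\<And>r. r \<in> S \<Longrightarrow> \<bar>F r\<bar> \<le> g r"
  shows "\<bar>integral S F\<bar> \<le> I"
proof -
  have gnn: "0 \<le> I"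
    using gI by (rule has_integral_nonneg) (use le in force)
  show ?thesis
  proof (cases "F integrable_on S")
    case True
    have "norm (integral S F) \<le> integral S g"
      by (rule integral_norm_bound_integral[OF True]) (use gI le in auto)
    then show ?thesis using gI by (simp add: integral_unique)
  next
    case False
    then show ?thesis using gnn by (simp add: not_integrable_integral)
  qed
qed

lemma final_arith:
  fixes \<alpha> \<beta> b t I1 I2 I3 :: real
  assumes t1: "t \<ge> 1/10" and \<alpha>\<beta>: "\<alpha> \<le> \<beta>" and \<beta>b: "\<beta> \<le> sqrt b" and sb: "1/2 \<le> sqrt b"
    and I1: "I1 \<le> 2 * \<alpha> / t + 2 / t\<^sup>2" and I2: "I2 \<le> 2 * \<beta> / t + 2 / t\<^sup>2"
    and I3: "I3 \<le> 2 * 0 / t + 2 / t\<^sup>2"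
  shows "I1 + I2 + I3 \<le> 124 * sqrt b / t"
proof -
  have t0: "t > 0" using t1 by linarith
  define u where "u = 1 / t"
  have u0: "u > 0" using t0 by (simp add: u_def)
  have u10: "u \<le> 10" unfolding u_def using t1 t0 by (simp add: field_simps)
  have e1: "2 * \<alpha> / t = 2 * \<alpha> * u" "2 * \<beta> / t = 2 * \<beta> * u" "2 / t\<^sup>2 = 2 * (u * u)"
    "124 * sqrt b / t = 124 * (sqrt b * u)"
    by (simp_all add: u_def power2_eq_square)
  have "u * u \<le> 10 * u" using u10 u0 by (intro mult_right_mono) auto
  moreover have "\<alpha> * u \<le> sqrt b * u" using \<alpha>\<beta> \<beta>b u0 by (intro mult_right_mono) auto
  moreover have "\<beta> * u \<le> sqrt b * u" using \<beta>b u0 by (intro mult_right_mono) auto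
  moreover have "1/2 * u \<le> sqrt b * u" using sb u0 by (intro mult_right_mono) auto
  ultimately show ?thesis using I1 I2 I3 e1 by simp
qed

lemma scale_le: "\<bar>(1 / (4 * pi)) * x\<bar> \<le> \<bar>x::real\<bar>"
proof -
  have "1 / (4 * pi) \<le> 1" using pi_gt3 by (simp add: field_simps)
  moreover have "0 \<le> 1 / (4 * pi)" by simp
  ultimately have "(1 / (4 * pi)) * \<bar>x\<bar> \<le> \<bar>x\<bar>" by (intro mult_left_le_one_le) auto
  then show ?thesis by (simp add: abs_mult)
qed

lemma main_bound:
  fixes a b t :: real
  assumes a1: "1/4 \<le> a" and ab: "a \<le> b" and t1: "t \<ge> 1/10"
  shows "\<bar>R_I t a b\<bar> \<le> 124 * sqrt b / t"
proof -
  define \<alpha> where "\<alpha> = spec_param a"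
  define \<beta> where "\<beta> = spec_param b"
  have t0: "t > 0" using t1 by linarith
  have \<alpha>0: "0 \<le> \<alpha>" unfolding \<alpha>_def spec_param_def using a1 by simp
  have \<alpha>\<beta>: "\<alpha> \<le> \<beta>" unfolding \<alpha>_def \<beta>_def spec_param_def using ab by simp
  have \<beta>0: "0 \<le> \<beta>" using \<alpha>0 \<alpha>\<beta> by linarith
  have \<beta>b: "\<beta> \<le> sqrt b" unfolding \<beta>_def spec_param_def by simp
  have sq14: "sqrt (1/4::real) = 1/2" by (rule real_sqrt_unique) (auto simp: power2_eq_square)
  have sb: "1/2 \<le> sqrt b"
    using real_sqrt_le_mono[of "1/4" b] a1 ab sq14 by simp
  obtain I1 where I1: "((\<lambda>r. exp (- t * \<bar>r - \<alpha>\<bar>) * r) has_integral I1) {0..}" "I1 \<le> 2 * \<alpha> / t + 2 / t\<^sup>2"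
    using maj[OF t0 \<alpha>0] by blast
  obtain I2 where I2: "((\<lambda>r. exp (- t * \<bar>r - \<beta>\<bar>) * r) has_integral I2) {0..}" "I2 \<le> 2 * \<beta> / t + 2 / t\<^sup>2"
    using maj[OF t0 \<beta>0] by blast
  obtain I3 where I3: "((\<lambda>r. exp (- t * \<bar>r - 0\<bar>) * r) has_integral I3) {0..}" "I3 \<le> 2 * 0 / t + 2 / t\<^sup>2"
    using maj[OF t0, of 0] by auto
  have gI: "((\<lambda>r. exp (- t * \<bar>r - \<alpha>\<bar>) * r + exp (- t * \<bar>r - \<beta>\<bar>) * r + exp (- t * \<bar>r - 0\<bar>) * r)
      has_integral (I1 + I2 + I3)) {0..}"
    by (intro has_integral_add I1(1) I2(1) I3(1))
  have intF: "\<bar>integral {0..} (\<lambda>r. (h_fun t \<alpha> \<beta> r + h_fun t \<alpha> \<beta> (-r) - indicator {\<alpha>..\<beta>} r) * r * tanh (pi * r))\<bar>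
      \<le> I1 + I2 + I3"
    by (rule intbound[OF gI]) (use Fbound[OF t0 \<alpha>0 \<alpha>\<beta>] in auto)
  have RI: "R_I t a b = 1 / (4 * pi) *
      integral {0..} (\<lambda>r. (h_fun t \<alpha> \<beta> r + h_fun t \<alpha> \<beta> (-r) - indicator {\<alpha>..\<beta>} r) * r * tanh (pi * r))"
    unfolding R_I_def Let_def \<alpha>_def \<beta>_def by simp
  have "\<bar>R_I t a b\<bar> \<le> I1 + I2 + I3"
    unfolding RI using scale_le intF by (rule order_trans)
  also have "\<dots> \<le> 124 * sqrt b / t"
    by (rule final_arith[OF t1 \<alpha>\<beta> \<beta>b sb I1(2) I2(2) I3(2)])
  finally show ?thesis .
qed

theorem proposition4p2:
  shows "\<exists>C::real. \<forall>a b t::real. 1/4 \<le> a \<longrightarrow> a \<le> b \<longrightarrow> t \<ge> 1/10 \<longrightarrow>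
           \<bar>R_I t a b\<bar> \<le> C * sqrt b / t"
  using main_bound by blast

end
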